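(* (Coercivity.) Consider the bilinear form $a_h$ on $V_h(\tilde\Omega_h)$ defined in the context. If the Nitsche parameter $\alpha$ is sufficiently large and the quantity $\hat h_{\tilde\Gamma_h}$ is sufficiently small, then there exists a constant $C_a>0$ independent of the mesh size such that $$a_h(u_h,u_h)\ \ge\ C_a\,\|u_h\|_a^2\qquad\forall u_h\in V_h(\tilde\Omega_h),$$ where $\|u_h\|_a^2=\|\nabla u_h\|^2_{0,\tilde\Omega_h}+\|h^{-1/2}S_h u_h\|^2_{0,\tilde\Gamma_h}$.
   Context: Let $n_d\in\{2,3\}$ and let $\Omega\subset\mathbb{R}^{n_d}$ be a bounded connected open set with Lipschitz boundary $\Gamma$. For a measurable set $A$ put $l(A)=\mathrm{meas}_{n_d}(A)^{1/n_d}$. Let $\mathcal D\supseteq\overline\Omega$ be a closed domain and $\{\mathcal T_h\}$ a family of admissible, shape-regular simplicial triangulations of $\mathcal D$. Set $\tilde{\mathcal T}_h=\{T\in\mathcal T_h: T\subset\overline\Omega\}$, the surrogate domain $\tilde\Omega_h=\mathrm{int}\big(\bigcup_{T\in\tilde{\mathcal T}_h}T\big)\subseteq\Omega$, the surrogate boundary $\tilde\Gamma_h=\partial\tilde\Omega_h$ with outward unit normal $\tilde{\boldsymbol n}$. Let $h_T$ be the diameter of $T$ and $h$ the piecewise constant function with $h|_T=h_T$ (on $\tilde\Gamma_h$, $h$ is the size of the adjacent element); $\hat h_T=h_T/l(\tilde\Omega_h)$, $h_{\tilde\Gamma_h}=\max\{h_T:T\in\tilde{\mathcal T}_h,\ T\cap\tilde\Gamma_h\neq\emptyset\}$,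 $\hat h_{\tilde\Gamma_h}=h_{\tilde\Gamma_h}/l(\tilde\Omega_h)$. A map $\boldsymbol M_h:\tilde\Gamma_h\to\Gamma$ is given, and $\boldsymbol d(\tilde{\boldsymbol x})=\boldsymbol M_h(\tilde{\boldsymbol x})-\tilde{\boldsymbol x}$, written $\boldsymbol d=\|\boldsymbol d\|\boldsymbol\nu$ with $\boldsymbol\nu$ a unit vector. Standing assumption: there are constants $c_d>0$, $\zeta>0$ with $\|\boldsymbol d(\tilde{\boldsymbol x})\|\le c_d\,h_T\,\hat h_T^{\zeta}$ for all $\tilde{\boldsymbol x}\in\tilde\Gamma_h\cap T$, $T\in\tilde{\mathcal T}_h$. The shift operator is $S_hv=v+\nabla v\cdot\boldsymbol d$ on $\tilde\Gamma_h$. $V_h(\tilde\Omega_h)=\{v_h\in C^0(\tilde\Omega_h): v_h|_T\in\mathcal P^1(T)\ \forall T\in\tilde{\mathcal T}_h\}$. Writing $(\cdot,\cdot)_{\tilde\Omega_h}$ and $\langle\cdot,\cdot\rangle_{\tilde\Gamma_h}$ for $L^2$ inner products and $\alpha>0$ for a parameter, $$a_h(u,w)=(\nabla u,\nabla w)_{\tilde\Omega_h}-\langle\nabla u\cdot\tilde{\boldsymbol n},S_hw\rangle_{\tilde\Gamma_h}-\langle S_hu,\nabla w\cdot\tilde{\boldsymbol n}\rangle_{\tilde\Gamma_h}+\langle\alpha h^{-1}S_hu,S_hw\rangle_{\tilde\Gamma_h}+\langle\nabla u\cdot\tilde{\boldsymbol n},\nabla w\cdot\boldsymbol d\rangle_{\tilde\Gamma_h}.$$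 "Independent of the mesh size" means independent of $h$ (it may depend on the shape-regularity of the meshes, $c_d,\zeta$ and $\alpha$). *)

theory Defs
  imports "HOL-Analysis.Analysis"
begin

definition lipschitz_boundary :: "'a::euclidean_space set \<Rightarrow> bool" where
  "lipschitz_boundary \<Omega> \<longleftrightarrow>
     (\<forall>x\<in>frontier \<Omega>. \<exists>r>0. \<exists>e L \<phi>. norm e = 1 \<and>
        lipschitz_on L {z. z \<bullet> e = 0} (\<phi> :: 'a \<Rightarrow> real) \<and>
        \<Omega> \<inter> ball x r = {y \<in> ball x r. y \<bullet> e < \<phi> (y - (y \<bullet> e) *\<^sub>R e)})"

definition lsize :: "'a::euclidean_space set \<Rightarrow> real" where
  "lsize A = measure lebesgue A powr (1 / real DIM('a))"

definition admissible_triangulation :: "'a::euclidean_space set set \<Rightarrow> 'a set \<Rightarrow> bool" where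
  "admissible_triangulation Th D \<longleftrightarrow>
     finite Th \<and> (\<forall>T\<in>Th. int DIM('a) simplex T) \<and> \<Union>Th = D \<and>
     (\<forall>T1\<in>Th. \<forall>T2\<in>Th. (T1 \<inter> T2) face_of T1 \<and> (T1 \<inter> T2) face_of T2)"

definition inradius :: "'a::euclidean_space set \<Rightarrow> real" where
  "inradius T = Sup {r. \<exists>x. ball x r \<subseteq> T}"

definition shape_regular :: "real \<Rightarrow> 'a::euclidean_space set set \<Rightarrow> bool" where
  "shape_regular \<sigma> Th \<longleftrightarrow> (\<forall>T\<in>Th. diameter T \<le> \<sigma> * inradius T)"

definition tildeT :: "'a::euclidean_space set set \<Rightarrow> 'a set \<Rightarrow> 'a set set" where
  "tildeT Th \<Omega> = {T \<in> Th. T \<subseteq> closure \<Omega>}"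

definition sdom :: "'a::euclidean_space set set \<Rightarrow> 'a set" where
  "sdom Tt = interior (\<Union>Tt)"

definition sbdry :: "'a::euclidean_space set set \<Rightarrow> 'a set" where
  "sbdry Tt = frontier (sdom Tt)"

definition hGamma :: "'a::euclidean_space set set \<Rightarrow> real" where
  "hGamma Tt = Max {diameter T | T. T \<in> Tt \<and> T \<inter> sbdry Tt \<noteq> {}}"

definition hatGamma :: "'a::euclidean_space set set \<Rightarrow> real" where
  "hatGamma Tt = hGamma Tt / lsize (sdom Tt)"

definition hat_h :: "'a::euclidean_space set set \<Rightarrow> 'a set \<Rightarrow> real" where
  "hat_h Tt T = diameter T / lsize (sdom Tt)"

definition bdry_facets :: "'a::euclidean_space set set \<Rightarrow> ('a set \<times> 'a set) set" where
  "bdry_facets Tt = {(T, F). T \<in> Tt \<and> F facet_of T \<and> (\<forall>T'\<in>Tt. F facet_of T' \<longrightarrow> T' = T)}"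

definition outer_normal :: "'a::euclidean_space set \<Rightarrow> 'a set \<Rightarrow> 'a" where
  "outer_normal T F = (SOME \<nu>. norm \<nu> = 1 \<and> (\<forall>x\<in>F. \<forall>y\<in>F. \<nu> \<bullet> (x - y) = 0) \<and>
                               (\<forall>q\<in>T. \<forall>y\<in>F. \<nu> \<bullet> (q - y) \<le> 0))"

definition std_simplex :: "nat \<Rightarrow> (nat \<Rightarrow> real) set" where
  "std_simplex m = {t. (\<forall>i<m. 0 \<le> t i) \<and> (\<Sum>i<m. t i) \<le> 1}"

text \<open>Surface integral over an (n_d-1)-dimensional flat simplex F: affine
  parametrisation from the standard (n_d-1)-simplex, with the Gram-determinant
  surface element sqrt(det G).\<close>
definition facet_integral :: "'a::euclidean_space set \<Rightarrow> ('a \<Rightarrow> real) \<Rightarrow> real" where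
  "facet_integral F g =
    (let p = (SOME p. F = convex hull (p ` {..<DIM('a)}));
         m = DIM('a) - 1;
         v = (\<lambda>i. p (Suc i) - p 0);
         G = (\<lambda>i j. v i \<bullet> v j);
         J = sqrt (\<Sum>\<pi> | \<pi> permutes {..<m}. of_int (sign \<pi>) * (\<Prod>i<m. G i (\<pi> i)))
     in \<integral>t. indicator (std_simplex m) t * g (p 0 + (\<Sum>i<m. t i *\<^sub>R v i)) * J
          \<partial>(PiM {..<m} (\<lambda>_. lborel)))"

text \<open>integral over tilde Gamma_h, facet by facet; the integrand may depend on the
  adjacent element T (for h, gradients, normal)\<close>
definition bdry_int ::
  "'a::euclidean_space set set \<Rightarrow> ('a set \<Rightarrow> 'a set \<Rightarrow> 'a \<Rightarrow> real) \<Rightarrow> real" where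
  "bdry_int Tt f = (\<Sum>(T, F)\<in>bdry_facets Tt. facet_integral F (f T F))"

definition Vh :: "'a::euclidean_space set set \<Rightarrow> ('a \<Rightarrow> real) set" where
  "Vh Tt = {u. continuous_on (sdom Tt) u \<and> (\<forall>T\<in>Tt. \<exists>a c. \<forall>x\<in>T. u x = a \<bullet> x + c)}"

definition gradT :: "'a::euclidean_space set \<Rightarrow> ('a \<Rightarrow> real) \<Rightarrow> 'a" where
  "gradT T u = (SOME a. \<exists>c. \<forall>x\<in>T. u x = a \<bullet> x + c)"

definition Sh :: "('a::euclidean_space \<Rightarrow> 'a) \<Rightarrow> ('a \<Rightarrow> real) \<Rightarrow> 'a set \<Rightarrow> 'a \<Rightarrow> real" where
  "Sh M u T x = u x + gradT T u \<bullet> (M x - x)"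

definition ah :: "real \<Rightarrow> 'a::euclidean_space set set \<Rightarrow> ('a \<Rightarrow> 'a)
                  \<Rightarrow> ('a \<Rightarrow> real) \<Rightarrow> ('a \<Rightarrow> real) \<Rightarrow> real" where
  "ah \<alpha> Tt M u w =
     (\<Sum>T\<in>Tt. set_lebesgue_integral lebesgue T (\<lambda>x. gradT T u \<bullet> gradT T w))
     - bdry_int Tt (\<lambda>T F x. (gradT T u \<bullet> outer_normal T F) * Sh M w T x)
     - bdry_int Tt (\<lambda>T F x. Sh M u T x * (gradT T w \<bullet> outer_normal T F))
     + bdry_int Tt (\<lambda>T F x. \<alpha> / diameter T * Sh M u T x * Sh M w T x)
     + bdry_int Tt (\<lambda>T F x. (gradT T u \<bullet> outer_normal T F) * (gradT T w \<bullet> (M x - x)))"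

definition norm_a_sq :: "'a::euclidean_space set set \<Rightarrow> ('a \<Rightarrow> 'a) \<Rightarrow> ('a \<Rightarrow> real) \<Rightarrow> real" where
  "norm_a_sq Tt M u =
     (\<Sum>T\<in>Tt. set_lebesgue_integral lebesgue T (\<lambda>x. (norm (gradT T u))\<^sup>2))
     + bdry_int Tt (\<lambda>T F x. (Sh M u T x)\<^sup>2 / diameter T)"

end

theory Submission
  imports Defs
begin



definition QQ :: "nat \<Rightarrow> (nat \<Rightarrow> real) measure" where "QQ m = PiM {..<m} (\<lambda>_. lborel)"

definition fpp :: "'a::euclidean_space set \<Rightarrow> nat \<Rightarrow> 'a" where
  "fpp F = (SOME p. F = convex hull (p ` {..<DIM('a)}))"
definition fP :: "'a::euclidean_space set \<Rightarrow> (nat \<Rightarrow> real) \<Rightarrow> 'a" where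
  "fP F t = fpp F 0 + (\<Sum>i<DIM('a)-1. t i *\<^sub>R (fpp F (Suc i) - fpp F 0))"
definition fJ :: "'a::euclidean_space set \<Rightarrow> real" where
  "fJ F = sqrt (\<Sum>\<pi> | \<pi> permutes {..<DIM('a)-1}. of_int (sign \<pi>) *
      (\<Prod>i<DIM('a)-1. (fpp F (Suc i) - fpp F 0) \<bullet> (fpp F (Suc (\<pi> i)) - fpp F 0)))"

lemma FI_eq: "facet_integral F g =
   (\<integral>t. indicator (std_simplex (DIM('a)-1)) t * g (fP F t) * fJ F \<partial>QQ (DIM('a)-1))"
  for F :: "'a::euclidean_space set"
  by (simp add: facet_integral_def Let_def fpp_def fP_def fJ_def QQ_def)

definition FIint :: "'a::euclidean_space set \<Rightarrow> ('a \<Rightarrow> real) \<Rightarrow> bool" where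
  "FIint F f = integrable (QQ (DIM('a)-1)) (\<lambda>t. indicator (std_simplex (DIM('a)-1)) t * f (fP F t) * fJ F)"

lemma meas_P: "fP F \<in> borel_measurable (QQ (DIM('a)-1))" for F :: "'a::euclidean_space set"
  unfolding QQ_def fP_def[abs_def] by measurable

lemma meas_std: "(\<lambda>t. indicator (std_simplex m) t :: real) \<in> borel_measurable (QQ m)"
proof -
  have "(\<lambda>t. indicator (std_simplex m) t :: real) = (\<lambda>t. if (\<forall>i<m. 0 \<le> t i) \<and> (\<Sum>i<m. t i) \<le> 1 then 1 else 0)"
    by (auto simp: std_simplex_def indicator_def fun_eq_iff)
  also have "\<dots> \<in> borel_measurable (QQ m)" unfolding QQ_def by measurable
  finally show ?thesis .
qed

definition Box :: "nat \<Rightarrow> (nat \<Rightarrow> real) set" where "Box m = PiE {..<m} (\<lambda>_. {0..1::real})"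

lemma box_emeas: "emeasure (QQ m) (Box m) = 1"
proof -
  interpret product_sigma_finite "\<lambda>_::nat. lborel::real measure"
    by (simp add: product_sigma_finite_def lborel.sigma_finite_measure_axioms)
  show ?thesis
    unfolding QQ_def Box_def by (subst emeasure_PiM) auto
qed

lemma box_meas: "measure (QQ m) (Box m) = 1"
  using box_emeas by (simp add: measure_def)

lemma box_sets: "Box m \<in> sets (QQ m)"
  unfolding QQ_def Box_def by (rule sets_PiM_I_finite) auto

lemma std_box: "t \<in> space (QQ m) \<Longrightarrow> t \<in> std_simplex m \<Longrightarrow> t \<in> Box m"
proof -
  assume t: "t \<in> space (QQ m)" "t \<in> std_simplex m"
  have "t i \<le> 1" if "i < m" for i
  proof -
    have "t i \<le> (\<Sum>j<m. t j)" by (rule member_le_sum) (use t that in \<open>auto simp: std_simplex_def\<close>)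
    then show ?thesis using t by (auto simp: std_simplex_def)
  qed
  then show ?thesis using t by (auto simp: Box_def QQ_def space_PiM std_simplex_def PiE_iff)
qed

lemma box_int: "integrable (QQ m) (\<lambda>t. indicator (Box m) t * (c::real))"
  using box_emeas box_sets by (intro integrable_mult_left) auto

lemma FIint_bdd:
  fixes F :: "'a::euclidean_space set"
  assumes meas: "(\<lambda>t. f (fP F t)) \<in> borel_measurable (QQ (DIM('a)-1))"
    and bd: "\<forall>x\<in>F. \<bar>f x\<bar> \<le> B" and PF: "\<forall>t\<in>std_simplex (DIM('a)-1). fP F t \<in> F"
  shows "FIint F f"
  unfolding FIint_def
proof (rule Bochner_Integration.integrable_bound[OF box_int[of _ "B * \<bar>fJ F\<bar>"]])
  show "(\<lambda>t. indicator (std_simplex (DIM('a)-1)) t * f (fP F t) * fJ F) \<in> borel_measurable (QQ (DIM('a)-1))"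
    using meas meas_std by measurable
  show "AE t in QQ (DIM('a) - 1). norm (indicator (std_simplex (DIM('a) - 1)) t * f (fP F t) * fJ F)
         \<le> norm (indicator (Box (DIM('a) - 1)) t * (B * \<bar>fJ F\<bar>))"
  proof (rule AE_I2)
    fix t assume t: "t \<in> space (QQ (DIM('a) - 1))"
    show "norm (indicator (std_simplex (DIM('a) - 1)) t * f (fP F t) * fJ F)
         \<le> norm (indicator (Box (DIM('a) - 1)) t * (B * \<bar>fJ F\<bar>))"
    proof (cases "t \<in> std_simplex (DIM('a) - 1)")
      case True
      then have "t \<in> Box (DIM('a) - 1)" using std_box t by blast
      moreover have "\<bar>f (fP F t)\<bar> \<le> B" using bd PF True by blast
      ultimately show ?thesis using True by (auto simp: abs_mult intro!: mult_right_mono)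
    qed simp
  qed
qed

lemma FI_lower:
  fixes F :: "'a::euclidean_space set"
  assumes "FIint F f" "fJ F \<ge> 0" "L \<le> 0" "\<forall>x\<in>F. L \<le> f x"
    and PF: "\<forall>t\<in>std_simplex (DIM('a)-1). fP F t \<in> F"
  shows "L * fJ F \<le> facet_integral F f"
proof -
  have "L * fJ F = (\<integral>t. indicator (Box (DIM('a)-1)) t * (L * fJ F) \<partial>QQ (DIM('a)-1))"
    using box_meas box_sets[THEN sets.sets_into_space] by (simp add: Int_absorb2)
  also have "\<dots> \<le> facet_integral F f"
    unfolding FI_eq
  proof (rule integral_mono)
    show "integrable (QQ (DIM('a)-1)) (\<lambda>t. indicator (std_simplex (DIM('a)-1)) t * f (fP F t) * fJ F)"
      using assms(1) by (simp add: FIint_def)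
    fix t assume t: "t \<in> space (QQ (DIM('a) - 1))"
    show "indicator (Box (DIM('a) - 1)) t * (L * fJ F) \<le> indicator (std_simplex (DIM('a) - 1)) t * f (fP F t) * fJ F"
    proof (cases "t \<in> std_simplex (DIM('a) - 1)")
      case True
      then have "t \<in> Box (DIM('a) - 1)" using std_box t by blast
      then show ?thesis using True assms PF by (auto intro!: mult_right_mono)
    next
      case False
      have "L * fJ F \<le> 0" using assms by (simp add: mult_nonpos_nonneg)
      then show ?thesis using False by (auto simp: indicator_def)
    qed
  qed (rule box_int)
  finally show ?thesis .
qed

lemma FI_cong:
  fixes F :: "'a::euclidean_space set"
  assumes PF: "\<forall>t\<in>std_simplex (DIM('a)-1). fP F t \<in> F" and eq: "\<forall>x\<in>F. f x = g x"
  shows "facet_integral F f = facet_integral F g" "FIint F f = FIint F g"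
proof -
  have "(\<lambda>t. indicator (std_simplex (DIM('a)-1)) t * f (fP F t) * fJ F) =
        (\<lambda>t. indicator (std_simplex (DIM('a)-1)) t * g (fP F t) * fJ F)"
    using PF eq by (auto simp: fun_eq_iff indicator_def)
  then show "facet_integral F f = facet_integral F g" "FIint F f = FIint F g"
    by (simp_all add: FI_eq FIint_def)
qed

lemma FI_add:
  fixes F :: "'a::euclidean_space set"
  assumes "FIint F f" "FIint F g"
  shows "facet_integral F (\<lambda>x. f x + g x) = facet_integral F f + facet_integral F g"
    "FIint F (\<lambda>x. f x + g x)"
  using assms unfolding FI_eq FIint_def
  by (simp_all add: distrib_left distrib_right)

lemma FI_cmult:
  fixes F :: "'a::euclidean_space set"
  assumes "FIint F f"
  shows "facet_integral F (\<lambda>x. c * f x) = c * facet_integral F f"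
    "FIint F (\<lambda>x. c * f x)"
proof -
  have eq: "(\<lambda>t. indicator (std_simplex (DIM('a)-1)) t * (c * f (fP F t)) * fJ F) =
    (\<lambda>t. c * (indicator (std_simplex (DIM('a)-1)) t * f (fP F t) * fJ F))"
    by (simp add: fun_eq_iff algebra_simps)
  show "facet_integral F (\<lambda>x. c * f x) = c * facet_integral F f"
    "FIint F (\<lambda>x. c * f x)"
    using assms unfolding FI_eq FIint_def eq by simp_all
qed


lemma g1: "(\<Sum>\<pi> | \<pi> permutes {..<1::nat}. of_int (sign \<pi>) * (\<Prod>i<1. G i (\<pi> i))) = (G 0 0 :: real)"
proof -
  have "{..<1::nat} = insert 0 {}" by auto
  then show ?thesis by (simp add: sum_over_permutations_insert)
qed
lemma g2: "(\<Sum>\<pi> | \<pi> permutes {..<2::nat}. of_int (sign \<pi>) * (\<Prod>i<2. G i (\<pi> i))) = (G 0 0 * G 1 1 - G 0 1 * G 1 0 :: real)"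
proof -
  have "{..<2::nat} = insert 1 (insert 0 {})" by auto
  then show ?thesis by (simp add: sum_over_permutations_insert sign_compose sign_swap_id)
qed

lemma gram_bound:
  fixes v :: "nat \<Rightarrow> 'a::euclidean_space"
  assumes m: "m = 1 \<or> m = 2" and h: "h \<ge> 0" and nv: "\<forall>i<m. norm (v i) \<le> h"
  shows "0 \<le> sqrt (\<Sum>\<pi> | \<pi> permutes {..<m}. of_int (sign \<pi>) * (\<Prod>i<m. v i \<bullet> v (\<pi> i)))
     \<and> sqrt (\<Sum>\<pi> | \<pi> permutes {..<m}. of_int (sign \<pi>) * (\<Prod>i<m. v i \<bullet> v (\<pi> i))) \<le> h ^ m"
proof -
  let ?X = "(\<Sum>\<pi> | \<pi> permutes {..<m}. of_int (sign \<pi>) * (\<Prod>i<m. v i \<bullet> v (\<pi> i)))"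
  have "0 \<le> ?X \<and> ?X \<le> (h ^ m)\<^sup>2"
  proof (cases "m = 1")
    case True
    have "?X = v 0 \<bullet> v 0" unfolding True by (rule g1)
    moreover have "norm (v 0) \<le> h" using nv True by auto
    ultimately show ?thesis using True h
      by (simp add: power2_norm_eq_inner[symmetric] power_mono)
  next
    case False
    then have m2: "m = 2" using m by auto
    have X: "?X = (v 0 \<bullet> v 0) * (v 1 \<bullet> v 1) - (v 0 \<bullet> v 1) * (v 1 \<bullet> v 0)" unfolding m2 by (rule g2)
    have n0: "norm (v 0) \<le> h" and n1: "norm (v 1) \<le> h" using nv m2 by auto
    have cs: "\<bar>v 0 \<bullet> v 1\<bar> \<le> norm (v 0) * norm (v 1)" by (rule Cauchy_Schwarz_ineq2)
    have "(v 0 \<bullet> v 1)^2 \<le> (norm (v 0) * norm (v 1))^2"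
      using cs by (metis abs_ge_zero power2_abs power_mono)
    then have lo0: "0 \<le> (norm (v 0))^2 * (norm (v 1))^2 - (v 0 \<bullet> v 1) * (v 0 \<bullet> v 1)"
      using power_mult_distrib[of "norm (v 0)" "norm (v 1)" 2] power2_eq_square[of "v 0 \<bullet> v 1"] by linarith
    have e: "(v 1 \<bullet> v 1) = (norm (v 1))^2" "(v 0 \<bullet> v 0) = (norm (v 0))^2" "v 1 \<bullet> v 0 = v 0 \<bullet> v 1"
      by (simp_all add: power2_norm_eq_inner inner_commute)
    have lo: "0 \<le> ?X" unfolding X e using lo0 by simp
    have "?X \<le> (norm (v 0))^2 * (norm (v 1))^2" unfolding X e
      by simp
    also have "\<dots> \<le> h^2 * h^2" using n0 n1 by (intro mult_mono power_mono) auto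
    also have "\<dots> = (h^m)^2" using m2 by (simp add: power2_eq_square)
    finally show ?thesis using lo by simp
  qed
  then have "sqrt ?X \<le> sqrt ((h^m)^2)" by (intro real_sqrt_le_mono) auto
  also have "\<dots> = h^m" using h by simp
  finally show ?thesis using \<open>0 \<le> ?X \<and> _\<close> by simp
qed


lemma simp_basic:
  fixes T :: "'a::euclidean_space set"
  assumes "int DIM('a) simplex T"
  shows "compact T" "convex T" "aff_dim T = DIM('a)" "interior T \<noteq> {}" "polytope T" "T \<noteq> {}"
    "bounded T" "closed T"
proof -
  obtain C where C: "finite C" "\<not> affine_dependent C" "int (card C) = DIM('a) + 1" "T = convex hull C"
    using assms by (auto simp: simplex)
  show ct: "compact T" using C by (simp add: compact_convex_hull finite_imp_compact)
  show cv: "convex T" using C by simp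
  show ad: "aff_dim T = DIM('a)" using aff_dim_simplex[OF assms] .
  show ne: "T \<noteq> {}" using C by auto
  have "affine hull T = UNIV" using ad aff_dim_eq_full by blast
  then have "rel_interior T = interior T" by (rule rel_interior_interior)
  then show "interior T \<noteq> {}" using rel_interior_eq_empty[OF cv] ne by simp
  show "polytope T" using C polytope_convex_hull by blast
  show "bounded T" "closed T" using ct by (auto simp: compact_imp_bounded compact_imp_closed)
qed

lemma diam_pos:
  fixes T :: "'a::euclidean_space set"
  assumes "int DIM('a) simplex T"
  shows "0 < diameter T"
proof -
  obtain C where C: "finite C" "\<not> affine_dependent C" "int (card C) = DIM('a) + 1" "T = convex hull C"
    using assms by (auto simp: simplex)
  have "card C \<ge> 2" using C(3) DIM_positive[where 'a='a] by linarith
  then obtain a b where ab: "a \<in> C" "b \<in> C" "a \<noteq> b"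
    by (metis One_nat_def card_2_iff' card_le_Suc_iff numeral_2_eq_2 insertCI)
  have "dist a b \<le> diameter T"
    using ab C simp_basic(7)[OF assms] by (intro diameter_bounded_bound) (auto simp: hull_inc)
  moreover have "0 < dist a b" using ab by simp
  ultimately show ?thesis by linarith
qed

lemma facet_basic:
  fixes T :: "'a::euclidean_space set"
  assumes "int DIM('a) simplex T" "F facet_of T"
  shows "F = convex hull (fpp F ` {..<DIM('a)})" "F \<subseteq> T" "\<And>i. i < DIM('a) \<Longrightarrow> fpp F i \<in> F"
    "convex F" "compact F" "F \<noteq> {}"
proof -
  obtain C where C: "finite C" "\<not> affine_dependent C" "int (card C) = DIM('a) + 1" "T = convex hull C"
    using assms by (auto simp: simplex)
  obtain u where u: "u \<in> C" "F = convex hull (C - {u})"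
    using assms(2) C facet_of_convex_hull_affine_independent by metis
  have cu: "card (C - {u}) = DIM('a)" using C u by auto
  obtain p where p: "bij_betw p {0..<card (C - {u})} (C - {u})"
    using ex_bij_betw_nat_finite C by blast
  then have "p ` {..<DIM('a)} = C - {u}" using cu by (simp add: bij_betw_def atLeast0LessThan)
  then have "\<exists>p. F = convex hull (p ` {..<DIM('a)})" using u by metis
  then show F: "F = convex hull (fpp F ` {..<DIM('a)})" unfolding fpp_def by (rule someI_ex)
  show "F \<subseteq> T" using assms(2) by (simp add: facet_of_def face_of_imp_subset)
  show "\<And>i. i < DIM('a) \<Longrightarrow> fpp F i \<in> F" by (subst F) (auto intro: hull_inc)
  show "convex F" by (subst F) (rule convex_convex_hull)
  show "compact F" by (subst F) (simp add: compact_convex_hull finite_imp_compact)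
  show "F \<noteq> {}" using assms(2) by (simp add: facet_of_def)
qed

lemma fP_in:
  fixes T :: "'a::euclidean_space set"
  assumes "int DIM('a) simplex T" "F facet_of T" "t \<in> std_simplex (DIM('a)-1)"
  shows "fP F t \<in> F"
proof -
  let ?m = "DIM('a) - 1"
  have dm: "DIM('a) = Suc ?m" using DIM_positive[where 'a='a] by simp
  define w where "w j = (if j = 0 then 1 - (\<Sum>i<?m. t i) else t (j - 1))" for j
  have "(\<Sum>j<Suc ?m. w j *\<^sub>R fpp F j) \<in> F"
  proof (rule convex_sum)
    show "convex F" using facet_basic[OF assms(1,2)] by simp
    have "(\<Sum>j<Suc ?m. w j) = w 0 + (\<Sum>i<?m. w (Suc i))" by (rule sum.lessThan_Suc_shift)
    then show "(\<Sum>j<Suc ?m. w j) = 1" by (simp add: w_def)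
    fix j assume j: "j \<in> {..<Suc ?m}"
    show "0 \<le> w j" using assms(3) j by (auto simp: w_def std_simplex_def)
    show "fpp F j \<in> F" using facet_basic(3)[OF assms(1,2)] j dm by simp
  qed simp
  moreover have "(\<Sum>j<Suc ?m. w j *\<^sub>R fpp F j) = w 0 *\<^sub>R fpp F 0 + (\<Sum>i<?m. w (Suc i) *\<^sub>R fpp F (Suc i))"
    by (rule sum.lessThan_Suc_shift)
  moreover have "w 0 *\<^sub>R fpp F 0 + (\<Sum>i<?m. w (Suc i) *\<^sub>R fpp F (Suc i)) = fP F t"
    by (simp add: w_def fP_def scaleR_diff_right sum_subtractf scaleR_diff_left scaleR_sum_left algebra_simps)
  ultimately show ?thesis by simp
qed

lemma facets_card:
  fixes T :: "'a::euclidean_space set"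
  assumes "int DIM('a) simplex T"
  shows "finite {F. F facet_of T}" "card {F. F facet_of T} \<le> Suc DIM('a)"
proof -
  obtain C where C: "finite C" "\<not> affine_dependent C" "int (card C) = DIM('a) + 1" "T = convex hull C"
    using assms by (auto simp: simplex)
  have sub: "{F. F facet_of T} \<subseteq> (\<lambda>u. convex hull (C - {u})) ` C"
    using C facet_of_convex_hull_affine_independent by fastforce
  show "finite {F. F facet_of T}" using sub C by (meson finite_imageI finite_subset)
  have "card {F. F facet_of T} \<le> card ((\<lambda>u. convex hull (C - {u})) ` C)"
    using sub C by (intro card_mono) auto
  also have "\<dots> \<le> card C" using C by (intro card_image_le) auto
  finally show "card {F. F facet_of T} \<le> Suc DIM('a)" using C by linarith
qed

lemma normal_norm:
  fixes T :: "'a::euclidean_space set"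
  assumes "int DIM('a) simplex T" "F facet_of T"
  shows "norm (outer_normal T F) = 1"
proof -
  have "polyhedron T" using simp_basic(5)[OF assms(1)] by (rule polytope_imp_polyhedron)
  moreover have "F face_of T" using assms(2) by (simp add: facet_of_def)
  ultimately have "F exposed_face_of T" using exposed_face_of_polyhedron by blast
  then obtain a b where ab: "T \<subseteq> {x. a \<bullet> x \<le> b}" "F = T \<inter> {x. a \<bullet> x = b}"
    by (auto simp: exposed_face_of_def)
  have "a \<noteq> 0"
  proof
    assume a0: "a = 0"
    obtain x where "x \<in> F" using assms(2) by (auto simp: facet_of_def)
    then have "b = 0" using ab a0 by (auto split: if_splits)
    then have "F = T" using ab a0 by auto
    then show False using assms(2) by simp
  qed
  define \<nu> where "\<nu> = a /\<^sub>R norm a"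
  have "norm \<nu> = 1 \<and> (\<forall>x\<in>F. \<forall>y\<in>F. \<nu> \<bullet> (x - y) = 0) \<and> (\<forall>q\<in>T. \<forall>y\<in>F. \<nu> \<bullet> (q - y) \<le> 0)"
  proof (intro conjI ballI)
    show "norm \<nu> = 1" using \<open>a \<noteq> 0\<close> by (simp add: \<nu>_def)
    fix x y assume "x \<in> F" "y \<in> F"
    then show "\<nu> \<bullet> (x - y) = 0" using ab by (simp add: \<nu>_def inner_diff_right)
  next
    fix q y assume "q \<in> T" "y \<in> F"
    then have "a \<bullet> (q - y) \<le> 0" using ab by (auto simp: inner_diff_right)
    then show "\<nu> \<bullet> (q - y) \<le> 0" by (simp add: \<nu>_def mult_nonneg_nonpos)
  qed
  then show ?thesis unfolding outer_normal_def by (rule someI2) simp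
qed

lemma vol_lower:
  fixes T :: "'a::euclidean_space set"
  assumes "int DIM('a) simplex T" "diameter T \<le> \<sigma> * inradius T"
  shows "diameter T ^ DIM('a) \<le> (2 * \<bar>\<sigma>\<bar>) ^ DIM('a) / measure lborel (ball (0::'a) 1) * measure lebesgue T"
proof -
  let ?S = "{r. \<exists>x. ball x r \<subseteq> T}"
  have bT: "bounded T" using simp_basic(7)[OF assms(1)] .
  have bdd: "bdd_above ?S"
  proof (rule bdd_aboveI)
    fix r assume "r \<in> ?S"
    then obtain x where x: "ball x r \<subseteq> T" by auto
    have "diameter (ball x r) \<le> diameter T" using x bT by (rule diameter_subset)
    moreover have "0 \<le> diameter T" using diam_pos[OF assms(1)] by simp
    ultimately show "r \<le> diameter T" by (auto split: if_splits)
  qed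
  have z: "0 \<in> ?S" by auto
  then have ne: "?S \<noteq> {}" by blast
  have ir0: "0 \<le> inradius T" unfolding inradius_def using z bdd by (rule cSup_upper)
  have dp: "0 < diameter T" using diam_pos[OF assms(1)] .
  then have "0 < \<sigma> * inradius T" using assms(2) by linarith
  then have irp: "0 < inradius T" and sp: "0 < \<sigma>" using ir0 by (auto simp: zero_less_mult_iff)
  have "inradius T / 2 < Sup ?S" using irp by (simp add: inradius_def)
  then obtain r where r: "r \<in> ?S" "inradius T / 2 < r" using less_cSup_iff[OF ne bdd] by blast
  then obtain x where x: "ball x r \<subseteq> T" by auto
  have r0: "0 \<le> r" using r irp by linarith
  have cb: "0 < measure lborel (ball (0::'a) 1)" by (rule content_ball_pos) simp
  have "measure lborel (ball x r) = r ^ DIM('a) * measure lborel (ball (0::'a) 1)"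
    using r0 by (rule content_ball_conv_unit_ball)
  moreover have "measure lborel (ball x r) \<le> measure lebesgue T"
  proof -
    have "measure lebesgue (ball x r) \<le> measure lebesgue T"
      using x lmeasurable_compact[OF simp_basic(1)[OF assms(1)]]
      by (intro measure_mono_fmeasurable) auto
    then show ?thesis by simp
  qed
  ultimately have A: "r ^ DIM('a) * measure lborel (ball (0::'a) 1) \<le> measure lebesgue T" by simp
  have "\<sigma> * inradius T \<le> \<sigma> * (2 * r)" using r sp by (intro mult_left_mono) auto
  then have "diameter T \<le> (2 * \<sigma>) * r" using assms(2) by simp
  then have "diameter T / (2 * \<sigma>) \<le> r"
    using sp by (simp add: divide_le_eq mult.commute)
  then have "(diameter T / (2 * \<sigma>)) ^ DIM('a) \<le> r ^ DIM('a)"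
    using dp sp by (intro power_mono) auto
  then have "(diameter T / (2 * \<sigma>)) ^ DIM('a) * measure lborel (ball (0::'a) 1) \<le> measure lebesgue T"
    using A cb by (meson mult_right_mono less_imp_le order_trans)
  then show ?thesis using sp cb by (simp add: field_simps power_divide)
qed

lemma facet_in_sbdry:
  fixes Tt :: "'a::euclidean_space set set"
  assumes fin: "finite Tt" and sx: "\<forall>T\<in>Tt. int DIM('a) simplex T"
    and conf: "\<forall>T1\<in>Tt. \<forall>T2\<in>Tt. (T1 \<inter> T2) face_of T1 \<and> (T1 \<inter> T2) face_of T2"
    and TF: "(T, F) \<in> bdry_facets Tt"
  shows "F \<subseteq> sbdry Tt"
proof -
  have T: "T \<in> Tt" and F: "F facet_of T" and uniq: "\<forall>T'\<in>Tt. F facet_of T' \<longrightarrow> T' = T"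
    using TF by (auto simp: bdry_facets_def)
  have sT: "int DIM('a) simplex T" using sx T by blast
  let ?U = "\<Union>Tt"
  have FT: "F \<subseteq> T" using facet_basic(2)[OF sT F] .
  have "T \<subseteq> closure T" by (rule closure_subset)
  also have "closure T = closure (interior T)"
    using convex_closure_interior[OF simp_basic(2,4)[OF sT]] by simp
  also have "\<dots> \<subseteq> closure (interior ?U)" using T by (intro closure_mono interior_mono) auto
  finally have F1: "F \<subseteq> closure (sdom Tt)" using FT by (auto simp: sdom_def)
  have F2: "F \<inter> interior ?U = {}"
  proof (rule ccontr)
    assume "F \<inter> interior ?U \<noteq> {}"
    moreover have "closure (rel_interior F) = F"
      using convex_closure_rel_interior[OF facet_basic(4)[OF sT F]]
        compact_imp_closed[OF facet_basic(5)[OF sT F]] by simp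
    ultimately have "interior ?U \<inter> closure (rel_interior F) \<noteq> {}" by auto
    then have "interior ?U \<inter> rel_interior F \<noteq> {}"
      using open_Int_closure_eq_empty[of "interior ?U" "rel_interior F"] by auto
    then obtain z where zU: "z \<in> interior ?U" and zF: "z \<in> rel_interior F" by auto
    have zF': "z \<in> F" using zF rel_interior_subset by blast
    have FneT: "F \<noteq> T" using F by auto
    have Fface: "F face_of T" using F by (simp add: facet_of_def)
    have znT: "z \<notin> interior T" using face_of_disjoint_interior[OF Fface FneT] zF' by blast
    have "z \<in> closure (\<Union>(Tt - {T}))"
      unfolding closure_approachable
    proof (intro allI impI)
      fix e :: real assume e: "0 < e"
      let ?O = "ball z e \<inter> interior ?U"
      have "open ?O" by auto
      have "z \<in> ?O" using zU e by auto
      have "\<not> ?O \<subseteq> T"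
      proof
        assume "?O \<subseteq> T"
        then have "?O \<subseteq> interior T" using \<open>open ?O\<close> by (rule interior_maximal)
        then show False using \<open>z \<in> ?O\<close> znT by blast
      qed
      then obtain w where w: "w \<in> ?O" "w \<notin> T" by (meson subsetI)
      then have "w \<in> interior ?U" by simp
      then have "w \<in> ?U" by (rule subsetD[OF interior_subset])
      then obtain T'' where T'': "T'' \<in> Tt" "w \<in> T''" by (rule UnionE)
      have "T'' \<noteq> T" using T''(2) w(2) by metis
      then have "w \<in> \<Union>(Tt - {T})" using T'' by (intro UnionI[of T'']) simp_all
      moreover have "dist w z < e" using w by (simp add: dist_commute)
      ultimately show "\<exists>y\<in>\<Union>(Tt - {T}). dist y z < e" by (rule rev_bexI)
    qed
    moreover have "closed (\<Union>(Tt - {T}))"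
    proof (rule closed_Union)
      show "finite (Tt - {T})" using fin by simp
      show "\<forall>S\<in>Tt - {T}. closed S"
      proof
      fix S assume "S \<in> Tt - {T}"
      then have "int DIM('a) simplex S" using sx by simp
      then show "closed S" by (rule simp_basic(8))
      qed
    qed
    ultimately have "z \<in> \<Union>(Tt - {T})" by (simp add: closure_closed)
    then obtain T' where T'0: "T' \<in> Tt - {T}" "z \<in> T'" by (rule UnionE)
    then have T': "T' \<in> Tt" "T' \<noteq> T" "z \<in> T'" by simp_all
    have sT': "int DIM('a) simplex T'" using sx T' by blast
    let ?K = "T \<inter> T'"
    have K1: "?K face_of T" and K2: "?K face_of T'" using conf T T' by auto
    have zK: "z \<in> ?K \<inter> rel_interior F" using zF' FT T'(3) zF by blast
    have FK: "F \<subseteq> ?K" using zK by (intro subset_of_face_of[OF K1 FT]) auto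
    have KneT: "?K \<noteq> T"
    proof
      assume "?K = T"
      then have "T face_of T'" using K2 by simp
      moreover have "T \<noteq> T'" using T' by simp
      ultimately have "aff_dim T < aff_dim T'"
        by (intro face_of_aff_dim_lt[OF simp_basic(2)[OF sT']])
      then show False using simp_basic(3)[OF sT] simp_basic(3)[OF sT'] by simp
    qed
    have "aff_dim ?K < aff_dim T" using face_of_aff_dim_lt[OF simp_basic(2)[OF sT] K1 KneT] .
    moreover have FfK: "F face_of ?K" using face_of_subset[OF Fface FK] by blast
    have "F = ?K"
    proof (rule ccontr)
      assume "F \<noteq> ?K"
      then have "aff_dim F < aff_dim ?K"
        using face_of_aff_dim_lt[OF face_of_imp_convex[OF K1] FfK] by blast
      moreover have "aff_dim F = aff_dim T - 1" using F by (simp add: facet_of_def)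
      ultimately show False using \<open>aff_dim ?K < aff_dim T\<close> by linarith
    qed
    then have "F face_of T'" using K2 by simp
    moreover have "aff_dim F = aff_dim T' - 1"
      using F simp_basic(3)[OF sT] simp_basic(3)[OF sT'] by (simp add: facet_of_def)
    moreover have "F \<noteq> {}" using F by (simp add: facet_of_def)
    ultimately have "F facet_of T'" by (simp add: facet_of_def)
    then show False using uniq T' by blast
  qed
  show ?thesis using F1 F2 unfolding sbdry_def frontier_def sdom_def by auto
qed




lemma pw:
  fixes a s e h \<epsilon> \<eta> G \<alpha> C :: real
  assumes h: "h > 0" and ep: "\<epsilon> > 0" and a: "\<bar>a\<bar> \<le> G" and e: "\<bar>e\<bar> \<le> G * \<eta> * h"
    and al: "\<alpha> - C \<ge> 1 / \<epsilon>"
  shows "- (a * s) - s * a + \<alpha> / h * s * s + a * e - C * (s\<^sup>2 / h) \<ge> - ((\<epsilon> + \<eta>) * h * G\<^sup>2)"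
proof -
  have G0: "G \<ge> 0" using a by linarith
  have sq: "0 \<le> (\<epsilon> * h * a - s)\<^sup>2 / (\<epsilon> * h)" using h ep by simp
  have "(\<epsilon> * h * a - s)\<^sup>2 / (\<epsilon> * h) = \<epsilon> * h * a\<^sup>2 - 2 * a * s + s\<^sup>2 / (\<epsilon> * h)"
    using h ep by (simp add: field_simps power2_eq_square)
  then have y: "2 * a * s \<le> \<epsilon> * h * a\<^sup>2 + s\<^sup>2 / (\<epsilon> * h)" using sq by linarith
  have a2: "a\<^sup>2 \<le> G\<^sup>2" using a by (metis abs_ge_zero power2_abs power_mono)
  have "\<epsilon> * h * a\<^sup>2 \<le> \<epsilon> * h * G\<^sup>2" using a2 h ep by (intro mult_left_mono) auto
  have ae: "\<bar>a * e\<bar> \<le> G * (G * \<eta> * h)" unfolding abs_mult using a e G0 by (intro mult_mono) auto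
  have "s\<^sup>2 / (\<epsilon> * h) = (1 / \<epsilon>) * (s\<^sup>2 / h)" by (simp add: field_simps)
  also have "\<dots> \<le> (\<alpha> - C) * (s\<^sup>2 / h)" using al h by (intro mult_right_mono) auto
  finally have st: "s\<^sup>2 / (\<epsilon> * h) \<le> (\<alpha> - C) * (s\<^sup>2 / h)" .
  have e1: "\<alpha> / h * s * s = \<alpha> * (s\<^sup>2 / h)" by (simp add: power2_eq_square)
  have e2: "(\<alpha> - C) * (s\<^sup>2 / h) = \<alpha> * (s\<^sup>2 / h) - C * (s\<^sup>2 / h)" by (rule left_diff_distrib)
  have e3: "G * (G * \<eta> * h) = \<eta> * h * G\<^sup>2" by (simp add: power2_eq_square)
  have e4: "(\<epsilon> + \<eta>) * h * G\<^sup>2 = \<epsilon> * h * G\<^sup>2 + \<eta> * h * G\<^sup>2" by (simp add: algebra_simps)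
  have e5: "s * a = a * s" "2 * a * s = a * s + a * s" by simp_all
  have ae2: "- (\<eta> * h * G\<^sup>2) \<le> a * e" using ae e3 by (simp add: abs_le_iff)
  show ?thesis using y st ae2 e1 e2 e4 e5 \<open>\<epsilon> * h * a\<^sup>2 \<le> \<epsilon> * h * G\<^sup>2\<close> by linarith
qed

definition good :: "'a::euclidean_space set \<Rightarrow> ('a \<Rightarrow> real) \<Rightarrow> bool" where
  "good F f \<longleftrightarrow> (\<exists>f'. (\<forall>x\<in>F. f x = f' x) \<and> (\<lambda>t. f' (fP F t)) \<in> borel_measurable (QQ (DIM('a)-1))
      \<and> (\<exists>B. \<forall>x\<in>F. \<bar>f' x\<bar> \<le> B))"

lemma good_add: "good F f \<Longrightarrow> good F g \<Longrightarrow> good F (\<lambda>x. f x + g x)"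
  unfolding good_def
proof (elim exE conjE)
  fix f' g' B1 B2 assume *: "\<forall>x\<in>F. f x = f' x" "\<forall>x\<in>F. g x = g' x"
    "(\<lambda>t. f' (fP F t)) \<in> borel_measurable (QQ (DIM('a)-1))" "(\<lambda>t. g' (fP F t)) \<in> borel_measurable (QQ (DIM('a)-1))"
    "\<forall>x\<in>F. \<bar>f' x\<bar> \<le> B1" "\<forall>x\<in>F. \<bar>g' x\<bar> \<le> B2"
  show "\<exists>h'. (\<forall>x\<in>F. f x + g x = h' x) \<and> (\<lambda>t. h' (fP F t)) \<in> borel_measurable (QQ (DIM('a) - 1)) \<and> (\<exists>B. \<forall>x\<in>F. \<bar>h' x\<bar> \<le> B)"
    using * by (intro exI[of _ "\<lambda>x. f' x + g' x"] conjI exI[of _ "B1 + B2"]) (auto intro!: abs_triangle_ineq[THEN order_trans] add_mono)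
qed

lemma good_mult: "good F f \<Longrightarrow> good F g \<Longrightarrow> good F (\<lambda>x. f x * g x)"
  unfolding good_def
proof (elim exE conjE)
  fix f' g' B1 B2 assume *: "\<forall>x\<in>F. f x = f' x" "\<forall>x\<in>F. g x = g' x"
    "(\<lambda>t. f' (fP F t)) \<in> borel_measurable (QQ (DIM('a)-1))" "(\<lambda>t. g' (fP F t)) \<in> borel_measurable (QQ (DIM('a)-1))"
    "\<forall>x\<in>F. \<bar>f' x\<bar> \<le> B1" "\<forall>x\<in>F. \<bar>g' x\<bar> \<le> B2"
  show "\<exists>h'. (\<forall>x\<in>F. f x * g x = h' x) \<and> (\<lambda>t. h' (fP F t)) \<in> borel_measurable (QQ (DIM('a) - 1)) \<and> (\<exists>B. \<forall>x\<in>F. \<bar>h' x\<bar> \<le> B)"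
    using * by (intro exI[of _ "\<lambda>x. f' x * g' x"] conjI exI[of _ "B1 * B2"]) (auto simp: abs_mult intro!: mult_mono)
qed

lemma good_const: "good F (\<lambda>x. c)"
  unfolding good_def by (intro exI[of _ "\<lambda>x. c"]) auto

lemma good_FIint:
  fixes T :: "'a::euclidean_space set"
  assumes "int DIM('a) simplex T" "F facet_of T" "good F f"
  shows "FIint F f"
proof -
  have PF: "\<forall>t\<in>std_simplex (DIM('a)-1). fP F t \<in> F" using fP_in[OF assms(1,2)] by blast
  obtain f' B where f': "\<forall>x\<in>F. f x = f' x" "(\<lambda>t. f' (fP F t)) \<in> borel_measurable (QQ (DIM('a)-1))"
    "\<forall>x\<in>F. \<bar>f' x\<bar> \<le> B" using assms(3) unfolding good_def by blast
  have "FIint F f'" using FIint_bdd[OF f'(2,3) PF] .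
  then show ?thesis using FI_cong(2)[OF PF f'(1)] by simp
qed




lemma FI_add_good:
  fixes T :: "'a::euclidean_space set"
  assumes "int DIM('a) simplex T" "F facet_of T" "good F f" "good F g"
  shows "facet_integral F (\<lambda>x. f x + g x) = facet_integral F f + facet_integral F g"
  using FI_add(1)[OF good_FIint[OF assms(1,2,3)] good_FIint[OF assms(1,2,4)]] .

lemma FI_cmult_good:
  fixes T :: "'a::euclidean_space set"
  assumes "int DIM('a) simplex T" "F facet_of T" "good F f"
  shows "facet_integral F (\<lambda>x. c * f x) = c * facet_integral F f"
  using FI_cmult(1)[OF good_FIint[OF assms(1,2,3)]] .

lemma facet_bound:
  fixes T F :: "'a::euclidean_space set" and M :: "'a \<Rightarrow> 'a" and u :: "'a \<Rightarrow> real"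
  assumes dim: "DIM('a) = 2 \<or> DIM('a) = 3"
    and sT: "int DIM('a) simplex T" and F: "F facet_of T"
    and Md: "\<forall>x\<in>F. norm (M x - x) \<le> \<eta> * diameter T" and eta: "\<eta> \<ge> 0"
    and Mm: "M \<in> borel_measurable borel"
    and u: "\<forall>x\<in>T. u x = gradT T u \<bullet> x + c"
    and ep: "\<epsilon> > 0" and al: "\<alpha> - C \<ge> 1 / \<epsilon>"
  shows "- facet_integral F (\<lambda>x. (gradT T u \<bullet> outer_normal T F) * Sh M u T x)
         - facet_integral F (\<lambda>x. Sh M u T x * (gradT T u \<bullet> outer_normal T F))
         + facet_integral F (\<lambda>x. \<alpha> / diameter T * Sh M u T x * Sh M u T x)
         + facet_integral F (\<lambda>x. (gradT T u \<bullet> outer_normal T F) * (gradT T u \<bullet> (M x - x)))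
         - C * facet_integral F (\<lambda>x. (Sh M u T x)\<^sup>2 / diameter T)
         \<ge> - ((\<epsilon> + \<eta>) * (norm (gradT T u))\<^sup>2 * diameter T ^ DIM('a))"
proof -
  define g where "g = gradT T u"
  define h where "h = diameter T"
  define a where "a = g \<bullet> outer_normal T F"
  define S where "S = Sh M u T"
  have hp: "h > 0" unfolding h_def by (rule diam_pos[OF sT])
  have FT: "F \<subseteq> T" using facet_basic(2)[OF sT F] .
  have PF: "\<forall>t\<in>std_simplex (DIM('a)-1). fP F t \<in> F" using fP_in[OF sT F] by blast
  have na: "\<bar>a\<bar> \<le> norm g"
    using Cauchy_Schwarz_ineq2[of g "outer_normal T F"] normal_norm[OF sT F] by (simp add: a_def)
  obtain R where R: "\<forall>x\<in>F. norm x \<le> R"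
    using compact_imp_bounded[OF facet_basic(5)[OF sT F]] by (auto simp: bounded_iff)
  have mD: "(\<lambda>t. g \<bullet> (M (fP F t) - fP F t)) \<in> borel_measurable (QQ (DIM('a)-1))"
    using meas_P[where F=F] Mm by measurable
  have gD: "good F (\<lambda>x. g \<bullet> (M x - x))"
    unfolding good_def
  proof (intro exI conjI)
    show "\<forall>x\<in>F. g \<bullet> (M x - x) = g \<bullet> (M x - x)" by simp
    show "(\<lambda>t. g \<bullet> (M (fP F t) - fP F t)) \<in> borel_measurable (QQ (DIM('a)-1))" by (rule mD)
    show "\<forall>x\<in>F. \<bar>g \<bullet> (M x - x)\<bar> \<le> norm g * (\<eta> * h)"
    proof
      fix x assume "x \<in> F"
      then have "norm (M x - x) \<le> \<eta> * h" using Md by (simp add: h_def)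
      then show "\<bar>g \<bullet> (M x - x)\<bar> \<le> norm g * (\<eta> * h)"
        using Cauchy_Schwarz_ineq2[of g "M x - x"] by (meson mult_left_mono norm_ge_zero order_trans)
    qed
  qed
  have gS: "good F S"
    unfolding good_def
  proof (intro exI conjI)
    show "\<forall>x\<in>F. S x = g \<bullet> x + c + g \<bullet> (M x - x)"
      using u FT by (auto simp: S_def Sh_def g_def)
    show "(\<lambda>t. g \<bullet> fP F t + c + g \<bullet> (M (fP F t) - fP F t)) \<in> borel_measurable (QQ (DIM('a)-1))"
      using meas_P[where F=F] Mm by measurable
    show "\<forall>x\<in>F. \<bar>g \<bullet> x + c + g \<bullet> (M x - x)\<bar> \<le> norm g * R + \<bar>c\<bar> + norm g * (\<eta> * h)"
    proof
      fix x assume x: "x \<in> F"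
      then have "norm (M x - x) \<le> \<eta> * h" using Md by (simp add: h_def)
      then have 1: "\<bar>g \<bullet> (M x - x)\<bar> \<le> norm g * (\<eta> * h)"
        using Cauchy_Schwarz_ineq2[of g "M x - x"] by (meson mult_left_mono norm_ge_zero order_trans)
      have 2: "\<bar>g \<bullet> x\<bar> \<le> norm g * R"
        using Cauchy_Schwarz_ineq2[of g x] R x by (meson mult_left_mono norm_ge_zero order_trans)
      show "\<bar>g \<bullet> x + c + g \<bullet> (M x - x)\<bar> \<le> norm g * R + \<bar>c\<bar> + norm g * (\<eta> * h)"
        using 1 2 by linarith
    qed
  qed
  define A1 where "A1 = (\<lambda>x. a * S x)"
  define A2 where "A2 = (\<lambda>x. S x * a)"
  define A3 where "A3 = (\<lambda>x. \<alpha> / h * S x * S x)"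
  define A4 where "A4 = (\<lambda>x. a * (g \<bullet> (M x - x)))"
  define A5 where "A5 = (\<lambda>x. S x * S x * (1 / h))"
  have g1: "good F A1" unfolding A1_def by (intro good_mult good_const gS)
  have g2: "good F A2" unfolding A2_def by (intro good_mult good_const gS)
  have g3: "good F A3" unfolding A3_def by (intro good_mult good_const gS)
  have g4: "good F A4" unfolding A4_def by (intro good_mult good_const gD)
  have g5: "good F A5" unfolding A5_def by (intro good_mult good_const gS)
  have A5e: "(\<lambda>x. (S x)\<^sup>2 / h) = A5" by (simp add: A5_def fun_eq_iff power2_eq_square)
  define \<Phi> where "\<Phi> = (\<lambda>x. (-1) * A1 x + ((-1) * A2 x + (A3 x + (A4 x + (- C) * A5 x))))"
  have gm1: "good F (\<lambda>x. (-1) * A1 x)" "good F (\<lambda>x. (-1) * A2 x)" "good F (\<lambda>x. (- C) * A5 x)"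
    by (intro good_mult good_const g1 g2 g5)+
  have c1: "facet_integral F (\<lambda>x. (-1) * A1 x) = (-1) * facet_integral F A1" by (rule FI_cmult_good[OF sT F g1])
  have c2: "facet_integral F (\<lambda>x. (-1) * A2 x) = (-1) * facet_integral F A2" by (rule FI_cmult_good[OF sT F g2])
  have c5: "facet_integral F (\<lambda>x. (- C) * A5 x) = (- C) * facet_integral F A5" by (rule FI_cmult_good[OF sT F g5])
  have P1: "facet_integral F \<Phi> = - facet_integral F A1 - facet_integral F A2 + facet_integral F A3
      + facet_integral F A4 - C * facet_integral F A5"
    unfolding \<Phi>_def
    apply (subst FI_add_good[OF sT F], rule gm1, (intro good_add gm1 g3 g4)+)
    apply (subst FI_add_good[OF sT F], rule gm1, (intro good_add gm1 g3 g4)+)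
    apply (subst FI_add_good[OF sT F], rule g3, (intro good_add gm1 g3 g4)+)
    apply (subst FI_add_good[OF sT F], rule g4, (intro good_add gm1 g3 g4)+)
    apply (simp only: c1 c2 c5)
    done
  have P2: "facet_integral F \<Phi> \<ge> (- ((\<epsilon> + \<eta>) * h * (norm g)\<^sup>2)) * fJ F"
  proof (rule FI_lower[OF _ _ _ _ PF])
    have "good F \<Phi>" unfolding \<Phi>_def by (intro good_add gm1 g3 g4)
    then show "FIint F \<Phi>" by (rule good_FIint[OF sT F])
    show "- ((\<epsilon> + \<eta>) * h * (norm g)\<^sup>2) \<le> 0" using ep eta hp by simp
    let ?v = "\<lambda>i. fpp F (Suc i) - fpp F 0"
    have m12: "DIM('a) - 1 = 1 \<or> DIM('a) - 1 = 2" using dim by auto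
    have nv: "\<forall>i<DIM('a) - 1. norm (?v i) \<le> h"
    proof (intro allI impI)
      fix i assume "i < DIM('a) - 1"
      then have "fpp F (Suc i) \<in> T" "fpp F 0 \<in> T" using facet_basic(3)[OF sT F] FT by auto
      then show "norm (?v i) \<le> h" unfolding h_def
        using diameter_bounded_bound[OF simp_basic(7)[OF sT]] by (simp add: dist_norm)
    qed
    from gram_bound[OF m12 _ nv] hp show "0 \<le> fJ F" by (simp add: fJ_def)
    show "\<forall>x\<in>F. - ((\<epsilon> + \<eta>) * h * (norm g)\<^sup>2) \<le> \<Phi> x"
    proof
      fix x assume x: "x \<in> F"
      have e: "\<bar>g \<bullet> (M x - x)\<bar> \<le> norm g * \<eta> * h"
      proof -
        have "norm (M x - x) \<le> \<eta> * h" using Md x by (simp add: h_def)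
        then show ?thesis using Cauchy_Schwarz_ineq2[of g "M x - x"]
          by (metis mult.assoc mult_left_mono norm_ge_zero order_trans)
      qed
      have "- (a * S x) - S x * a + \<alpha> / h * S x * S x + a * (g \<bullet> (M x - x)) - C * ((S x)\<^sup>2 / h)
            \<ge> - ((\<epsilon> + \<eta>) * h * (norm g)\<^sup>2)"
        by (rule pw[OF hp ep na e al])
      then show "- ((\<epsilon> + \<eta>) * h * (norm g)\<^sup>2) \<le> \<Phi> x"
        by (simp add: \<Phi>_def A1_def A2_def A3_def A4_def A5_def power2_eq_square)
    qed
  qed
  have P3: "(- ((\<epsilon> + \<eta>) * h * (norm g)\<^sup>2)) * fJ F \<ge> - ((\<epsilon> + \<eta>) * (norm g)\<^sup>2 * h ^ DIM('a))"
  proof -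
    let ?v = "\<lambda>i. fpp F (Suc i) - fpp F 0"
    have m12: "DIM('a) - 1 = 1 \<or> DIM('a) - 1 = 2" using dim by auto
    have nv: "\<forall>i<DIM('a) - 1. norm (?v i) \<le> h"
    proof (intro allI impI)
      fix i assume "i < DIM('a) - 1"
      then have "fpp F (Suc i) \<in> T" "fpp F 0 \<in> T" using facet_basic(3)[OF sT F] FT by auto
      then show "norm (?v i) \<le> h" unfolding h_def
        using diameter_bounded_bound[OF simp_basic(7)[OF sT]] by (simp add: dist_norm)
    qed
    from gram_bound[OF m12 _ nv] hp have J: "fJ F \<le> h ^ (DIM('a) - 1)" by (simp add: fJ_def)
    have L: "- ((\<epsilon> + \<eta>) * h * (norm g)\<^sup>2) \<le> 0" using ep eta hp by simp
    have "(- ((\<epsilon> + \<eta>) * h * (norm g)\<^sup>2)) * h ^ (DIM('a) - 1) \<le> (- ((\<epsilon> + \<eta>) * h * (norm g)\<^sup>2)) * fJ F"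
      using mult_left_mono_neg[OF J L] .
    moreover have "h * h ^ (DIM('a) - 1) = h ^ DIM('a)"
      by (subst power_Suc[symmetric]) simp
    moreover have "(- ((\<epsilon> + \<eta>) * h * (norm g)\<^sup>2)) * h ^ (DIM('a) - 1) = - ((\<epsilon> + \<eta>) * (norm g)\<^sup>2 * (h * h ^ (DIM('a) - 1)))"
      by (simp only: mult_ac minus_mult_left)
    ultimately show ?thesis by (metis (no_types, lifting))
  qed
  have E1: "facet_integral F A1 = facet_integral F (\<lambda>x. (gradT T u \<bullet> outer_normal T F) * Sh M u T x)"
    by (simp add: A1_def a_def S_def g_def)
  have E2: "facet_integral F A2 = facet_integral F (\<lambda>x. Sh M u T x * (gradT T u \<bullet> outer_normal T F))"
    by (simp add: A2_def a_def S_def g_def)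
  have E3: "facet_integral F A3 = facet_integral F (\<lambda>x. \<alpha> / diameter T * Sh M u T x * Sh M u T x)"
    by (simp add: A3_def h_def S_def)
  have E4: "facet_integral F A4 = facet_integral F (\<lambda>x. (gradT T u \<bullet> outer_normal T F) * (gradT T u \<bullet> (M x - x)))"
    by (simp add: A4_def a_def g_def)
  have E5: "facet_integral F A5 = facet_integral F (\<lambda>x. (Sh M u T x)\<^sup>2 / diameter T)"
    by (simp add: A5e[symmetric] h_def S_def)
  show ?thesis using P1 P2 P3 unfolding E1 E2 E3 E4 E5 g_def h_def by linarith
qed




theorem theorem2:
  fixes \<Omega> D :: "'a::euclidean_space set" and \<sigma> c_d \<zeta> :: real
  assumes "DIM('a) = 2 \<or> DIM('a) = 3"
    and "open \<Omega>" and "connected \<Omega>" and "bounded \<Omega>" and "\<Omega> \<noteq> {}"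
    and "lipschitz_boundary \<Omega>"
    and "closed D" and "D = closure (interior D)" and "connected (interior D)"
    and "closure \<Omega> \<subseteq> D"
    and "c_d > 0" and "\<zeta> > 0"
  shows "\<exists>\<alpha>0 \<delta>. \<delta> > 0 \<and> (\<forall>\<alpha>. \<alpha> > 0 \<and> \<alpha> \<ge> \<alpha>0 \<longrightarrow> (\<exists>C_a > 0.
           \<forall>Th M u. admissible_triangulation Th D \<and> shape_regular \<sigma> Th
             \<and> hatGamma (tildeT Th \<Omega>) \<le> \<delta>
             \<and> M \<in> borel_measurable borel
             \<and> (\<forall>x\<in>sbdry (tildeT Th \<Omega>). M x \<in> frontier \<Omega>)
             \<and> (\<forall>T\<in>tildeT Th \<Omega>. \<forall>x\<in>sbdry (tildeT Th \<Omega>) \<inter> T.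
                   norm (M x - x) \<le> c_d * diameter T * hat_h (tildeT Th \<Omega>) T powr \<zeta>)
             \<and> u \<in> Vh (tildeT Th \<Omega>)
             \<longrightarrow> ah \<alpha> (tildeT Th \<Omega>) M u u \<ge> C_a * norm_a_sq (tildeT Th \<Omega>) M u))"
proof -
  note dim = assms(1)
  define cb where "cb = measure lborel (ball (0::'a) 1)"
  have cb: "cb > 0" unfolding cb_def by (rule content_ball_pos) simp
  define K where "K = (2 * \<bar>\<sigma>\<bar>) ^ DIM('a) / cb"
  have K0: "K \<ge> 0" unfolding K_def using cb by simp
  define Kt where "Kt = K * real (Suc DIM('a)) + 1"
  have Kt1: "Kt \<ge> 1" unfolding Kt_def using K0 by simp
  define \<epsilon> where "\<epsilon> = 1 / (4 * Kt)"
  define \<eta> where "\<eta> = 1 / (4 * Kt)"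
  have ep: "\<epsilon> > 0" and eta: "\<eta> > 0" using Kt1 by (simp_all add: \<epsilon>_def \<eta>_def)
  define \<delta> where "\<delta> = (\<eta> / c_d) powr (1 / \<zeta>)"
  have dp: "\<delta> > 0" unfolding \<delta>_def using eta assms(11) by simp
  have dz: "c_d * \<delta> powr \<zeta> = \<eta>"
  proof -
    have "\<delta> powr \<zeta> = (\<eta> / c_d) powr (1 / \<zeta> * \<zeta>)" unfolding \<delta>_def by (simp add: powr_powr)
    also have "\<dots> = \<eta> / c_d" using assms(12) eta assms(11) by simp
    finally show ?thesis using assms(11) by simp
  qed
  show ?thesis
  proof (rule exI[of _ "1/2 + 4 * Kt"], rule exI[of _ \<delta>], intro conjI allI impI)
    show "\<delta> > 0" by (rule dp)
    fix \<alpha> :: real assume "0 < \<alpha> \<and> 1/2 + 4 * Kt \<le> \<alpha>"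
    then have al: "\<alpha> - 1/2 \<ge> 1 / \<epsilon>" by (simp add: \<epsilon>_def)
    show "\<exists>C_a>0. \<forall>Th M u. admissible_triangulation Th D \<and> shape_regular \<sigma> Th
             \<and> hatGamma (tildeT Th \<Omega>) \<le> \<delta>
             \<and> M \<in> borel_measurable borel
             \<and> (\<forall>x\<in>sbdry (tildeT Th \<Omega>). M x \<in> frontier \<Omega>)
             \<and> (\<forall>T\<in>tildeT Th \<Omega>. \<forall>x\<in>sbdry (tildeT Th \<Omega>) \<inter> T.
                   norm (M x - x) \<le> c_d * diameter T * hat_h (tildeT Th \<Omega>) T powr \<zeta>)
             \<and> u \<in> Vh (tildeT Th \<Omega>)
             \<longrightarrow> ah \<alpha> (tildeT Th \<Omega>) M u u \<ge> C_a * norm_a_sq (tildeT Th \<Omega>) M u"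
    proof (rule exI[of _ "1/2::real"], intro conjI allI impI)
      fix Th M u
      assume H: "admissible_triangulation Th D \<and> shape_regular \<sigma> Th
             \<and> hatGamma (tildeT Th \<Omega>) \<le> \<delta>
             \<and> M \<in> borel_measurable borel
             \<and> (\<forall>x\<in>sbdry (tildeT Th \<Omega>). M x \<in> frontier \<Omega>)
             \<and> (\<forall>T\<in>tildeT Th \<Omega>. \<forall>x\<in>sbdry (tildeT Th \<Omega>) \<inter> T.
                   norm (M x - x) \<le> c_d * diameter T * hat_h (tildeT Th \<Omega>) T powr \<zeta>)
             \<and> u \<in> Vh (tildeT Th \<Omega>)"
      define Tt where "Tt = tildeT Th \<Omega>"
      have TtTh: "Tt \<subseteq> Th" by (auto simp: Tt_def tildeT_def)
      have adm: "admissible_triangulation Th D" using H by blast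
      have fin: "finite Tt" using adm TtTh by (auto simp: admissible_triangulation_def intro: finite_subset)
      have sx: "\<forall>T\<in>Tt. int DIM('a) simplex T" using adm TtTh by (auto simp: admissible_triangulation_def)
      have conf: "\<forall>T1\<in>Tt. \<forall>T2\<in>Tt. (T1 \<inter> T2) face_of T1 \<and> (T1 \<inter> T2) face_of T2"
        using adm TtTh by (auto simp: admissible_triangulation_def)
      have sr: "\<forall>T\<in>Tt. diameter T \<le> \<sigma> * inradius T"
        using H TtTh by (auto simp: shape_regular_def)
      have hG: "hatGamma Tt \<le> \<delta>" using H by (simp add: Tt_def)
      have Mm: "M \<in> borel_measurable borel" using H by blast
      have Md0: "\<forall>T\<in>Tt. \<forall>x\<in>sbdry Tt \<inter> T. norm (M x - x) \<le> c_d * diameter T * hat_h Tt T powr \<zeta>"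
        using H by (simp add: Tt_def)
      have uV: "u \<in> Vh Tt" using H by (simp add: Tt_def)
      have uaff: "\<forall>T\<in>Tt. \<exists>c. \<forall>x\<in>T. u x = gradT T u \<bullet> x + c"
      proof
        fix T assume "T \<in> Tt"
        then have "\<exists>a c. \<forall>x\<in>T. u x = a \<bullet> x + c" using uV by (auto simp: Vh_def)
        then show "\<exists>c. \<forall>x\<in>T. u x = gradT T u \<bullet> x + c" unfolding gradT_def by (rule someI_ex)
      qed
      define BF where "BF = bdry_facets Tt"
      have BFsub: "BF \<subseteq> Sigma Tt (\<lambda>T. {F. F facet_of T})" by (auto simp: BF_def bdry_facets_def)
      have finS: "finite (Sigma Tt (\<lambda>T. {F. F facet_of T}))"
        using fin sx facets_card(1) by (intro finite_SigmaI) auto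
      have finBF: "finite BF" using finite_subset[OF BFsub finS] .
      have Md: "\<forall>x\<in>F. norm (M x - x) \<le> \<eta> * diameter T" if TF: "(T, F) \<in> BF" for T F
      proof
        fix x assume x: "x \<in> F"
        have T: "T \<in> Tt" and F: "F facet_of T" using TF by (auto simp: BF_def bdry_facets_def)
        have sT: "int DIM('a) simplex T" using sx T by blast
        have Fsb: "F \<subseteq> sbdry Tt" using facet_in_sbdry[OF fin sx conf] TF by (simp add: BF_def)
        have FT: "F \<subseteq> T" using facet_basic(2)[OF sT F] .
        have xs: "x \<in> sbdry Tt \<inter> T" using x Fsb FT by blast
        have "diameter T \<in> {diameter T | T. T \<in> Tt \<and> T \<inter> sbdry Tt \<noteq> {}}" using T xs by blast
        moreover have "finite {diameter T | T. T \<in> Tt \<and> T \<inter> sbdry Tt \<noteq> {}}" using fin by simp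
        ultimately have "diameter T \<le> hGamma Tt" unfolding hGamma_def by (intro Max_ge) auto
        moreover have ls: "lsize (sdom Tt) \<ge> 0" by (simp add: lsize_def)
        ultimately have "hat_h Tt T \<le> hatGamma Tt"
          unfolding hat_h_def hatGamma_def by (rule divide_right_mono)
        then have hh: "hat_h Tt T \<le> \<delta>" using hG by linarith
        have hh0: "hat_h Tt T \<ge> 0" unfolding hat_h_def using ls diam_pos[OF sT] by simp
        have "hat_h Tt T powr \<zeta> \<le> \<delta> powr \<zeta>" using hh hh0 assms(12) by (intro powr_mono2) auto
        then have "c_d * diameter T * hat_h Tt T powr \<zeta> \<le> c_d * diameter T * \<delta> powr \<zeta>"
          using assms(11) diam_pos[OF sT] by (intro mult_left_mono) auto
        also have "\<dots> = \<eta> * diameter T" using dz by (simp add: mult_ac)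
        finally have "c_d * diameter T * hat_h Tt T powr \<zeta> \<le> \<eta> * diameter T" .
        moreover have "norm (M x - x) \<le> c_d * diameter T * hat_h Tt T powr \<zeta>" using Md0 T xs by blast
        ultimately show "norm (M x - x) \<le> \<eta> * diameter T" by linarith
      qed
      define w where "w T = (norm (gradT T u))\<^sup>2 * measure lebesgue T" for T
      have w0: "w T \<ge> 0" for T by (simp add: w_def)
      define br where "br = (\<lambda>(T, F).
           - facet_integral F (\<lambda>x. (gradT T u \<bullet> outer_normal T F) * Sh M u T x)
         - facet_integral F (\<lambda>x. Sh M u T x * (gradT T u \<bullet> outer_normal T F))
         + facet_integral F (\<lambda>x. \<alpha> / diameter T * Sh M u T x * Sh M u T x)
         + facet_integral F (\<lambda>x. (gradT T u \<bullet> outer_normal T F) * (gradT T u \<bullet> (M x - x)))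
         - 1/2 * facet_integral F (\<lambda>x. (Sh M u T x)\<^sup>2 / diameter T))"
      have brb: "br p \<ge> - ((\<epsilon> + \<eta>) * K * w (fst p))" if p: "p \<in> BF" for p
      proof -
        obtain T F where pTF: "p = (T, F)" by (cases p)
        have T: "T \<in> Tt" and F: "F facet_of T" using p pTF by (auto simp: BF_def bdry_facets_def)
        have sT: "int DIM('a) simplex T" using sx T by blast
        obtain c where c: "\<forall>x\<in>T. u x = gradT T u \<bullet> x + c" using uaff T by blast
        have "br p \<ge> - ((\<epsilon> + \<eta>) * (norm (gradT T u))\<^sup>2 * diameter T ^ DIM('a))"
          unfolding pTF br_def using facet_bound[OF dim sT F Md[OF p[unfolded pTF]] _ Mm c ep al] eta
          by simp
        moreover have "diameter T ^ DIM('a) \<le> K * measure lebesgue T"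
          using vol_lower[OF sT] sr T by (simp add: K_def cb_def)
        then have "(\<epsilon> + \<eta>) * (norm (gradT T u))\<^sup>2 * diameter T ^ DIM('a)
                   \<le> (\<epsilon> + \<eta>) * (norm (gradT T u))\<^sup>2 * (K * measure lebesgue T)"
          using ep eta by (intro mult_left_mono) auto
        ultimately show ?thesis by (simp add: pTF w_def mult_ac)
      qed
      have sumbr: "(\<Sum>p\<in>BF. br p) \<ge> - ((\<epsilon> + \<eta>) * K * (\<Sum>p\<in>BF. w (fst p)))"
      proof -
        have "(\<Sum>p\<in>BF. br p) \<ge> (\<Sum>p\<in>BF. - ((\<epsilon> + \<eta>) * K * w (fst p)))"
          using brb by (intro sum_mono) auto
        then show ?thesis by (simp add: sum_distrib_left sum_negf)
      qed
      have sumw: "(\<Sum>p\<in>BF. w (fst p)) \<le> real (Suc DIM('a)) * (\<Sum>T\<in>Tt. w T)"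
      proof -
        have "(\<Sum>p\<in>BF. w (fst p)) \<le> (\<Sum>p\<in>Sigma Tt (\<lambda>T. {F. F facet_of T}). w (fst p))"
          using BFsub finS w0 by (intro sum_mono2) auto
        also have "\<dots> = (\<Sum>(T, F)\<in>Sigma Tt (\<lambda>T. {F. F facet_of T}). w T)"
          by (simp add: split_def)
        also have "\<dots> = (\<Sum>T\<in>Tt. \<Sum>F\<in>{F. F facet_of T}. w T)"
        proof (rule sum.Sigma[symmetric])
          show "finite Tt" by (rule fin)
          show "\<forall>T\<in>Tt. finite {F. F facet_of T}" using sx facets_card(1) by blast
        qed
        also have "\<dots> = (\<Sum>T\<in>Tt. real (card {F. F facet_of T}) * w T)" by simp
        also have "\<dots> \<le> (\<Sum>T\<in>Tt. real (Suc DIM('a)) * w T)"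
        proof (intro sum_mono mult_right_mono w0)
          fix T assume "T \<in> Tt"
          then have "int DIM('a) simplex T" using sx by blast
          then have "card {F. F facet_of T} \<le> Suc DIM('a)" by (rule facets_card(2))
          then show "real (card {F. F facet_of T}) \<le> real (Suc DIM('a))" by (simp only: of_nat_le_iff)
        qed
        finally show ?thesis by (simp add: sum_distrib_left)
      qed
      have vol: "set_lebesgue_integral lebesgue T (\<lambda>x. gradT T u \<bullet> gradT T u) = w T"
        "set_lebesgue_integral lebesgue T (\<lambda>x. (norm (gradT T u))\<^sup>2) = w T" if T: "T \<in> Tt" for T
      proof -
        have sT: "int DIM('a) simplex T" using sx T by blast
        have "T \<in> lmeasurable" using lmeasurable_compact[OF simp_basic(1)[OF sT]] .
        then have Ts: "T \<in> sets lebesgue" "emeasure lebesgue T \<noteq> \<infinity>" by (auto simp: fmeasurable_def)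
        show "set_lebesgue_integral lebesgue T (\<lambda>x. gradT T u \<bullet> gradT T u) = w T"
          using set_integral_const[OF Ts, of "gradT T u \<bullet> gradT T u"] by (simp add: w_def power2_norm_eq_inner mult.commute)
        show "set_lebesgue_integral lebesgue T (\<lambda>x. (norm (gradT T u))\<^sup>2) = w T"
          using set_integral_const[OF Ts, of "(norm (gradT T u))\<^sup>2"] by (simp add: w_def mult.commute)
      qed
      have ahE: "ah \<alpha> Tt M u u = (\<Sum>T\<in>Tt. w T)
          - bdry_int Tt (\<lambda>T F x. (gradT T u \<bullet> outer_normal T F) * Sh M u T x)
          - bdry_int Tt (\<lambda>T F x. Sh M u T x * (gradT T u \<bullet> outer_normal T F))
          + bdry_int Tt (\<lambda>T F x. \<alpha> / diameter T * Sh M u T x * Sh M u T x)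
          + bdry_int Tt (\<lambda>T F x. (gradT T u \<bullet> outer_normal T F) * (gradT T u \<bullet> (M x - x)))"
        unfolding ah_def using vol(1) by (simp cong: sum.cong)
      have naE: "norm_a_sq Tt M u = (\<Sum>T\<in>Tt. w T) + bdry_int Tt (\<lambda>T F x. (Sh M u T x)\<^sup>2 / diameter T)"
        unfolding norm_a_sq_def using vol(2) by (simp cong: sum.cong)
      have brE: "(\<Sum>p\<in>BF. br p) =
          - bdry_int Tt (\<lambda>T F x. (gradT T u \<bullet> outer_normal T F) * Sh M u T x)
          - bdry_int Tt (\<lambda>T F x. Sh M u T x * (gradT T u \<bullet> outer_normal T F))
          + bdry_int Tt (\<lambda>T F x. \<alpha> / diameter T * Sh M u T x * Sh M u T x)
          + bdry_int Tt (\<lambda>T F x. (gradT T u \<bullet> outer_normal T F) * (gradT T u \<bullet> (M x - x)))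
          - 1/2 * bdry_int Tt (\<lambda>T F x. (Sh M u T x)\<^sup>2 / diameter T)"
        unfolding bdry_int_def br_def BF_def
        by (simp add: sum.distrib sum_subtractf sum_distrib_left sum_negf split_def)
      have W0: "(\<Sum>T\<in>Tt. w T) \<ge> 0" using w0 by (intro sum_nonneg) auto
      have "(\<epsilon> + \<eta>) * K * (\<Sum>p\<in>BF. w (fst p)) \<le> (\<epsilon> + \<eta>) * K * (real (Suc DIM('a)) * (\<Sum>T\<in>Tt. w T))"
        using sumw ep eta K0 by (intro mult_left_mono) auto
      also have "\<dots> = (K * real (Suc DIM('a))) / (2 * Kt) * (\<Sum>T\<in>Tt. w T)"
        using Kt1 by (simp add: \<epsilon>_def \<eta>_def field_simps)
      also have "\<dots> \<le> 1/2 * (\<Sum>T\<in>Tt. w T)"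
      proof (rule mult_right_mono[OF _ W0])
        show "K * real (Suc DIM('a)) / (2 * Kt) \<le> 1/2"
          using Kt1 by (simp add: Kt_def field_simps)
      qed
      finally have "(\<epsilon> + \<eta>) * K * (\<Sum>p\<in>BF. w (fst p)) \<le> 1/2 * (\<Sum>T\<in>Tt. w T)" .
      then show "ah \<alpha> (tildeT Th \<Omega>) M u u \<ge> 1/2 * norm_a_sq (tildeT Th \<Omega>) M u"
        using sumbr ahE naE brE unfolding Tt_def[symmetric] by linarith
    qed simp
  qed
qed


end
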